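(* Let $A$ be an essential arrangement of affine hyperplanes in a real affine space $V$, $f_0$ a non-constant affine-linear function, and for large $t$ let $A_t=A\cup\{\{f_0=t\}\}$. Let $H=\{f=0\}\in A$, let $\Delta$ be a growing domain of $A$ on which $|f|$ is unbounded, and let $\Delta_t=\Delta\cap\{f_0<t\}$. Let $\alpha\in\mathbb C$ and let $g=\exp(\alpha(\log|f|+i\theta))$ be a branch of $f^\alpha$ on $\Delta$, where $\theta$ is a real constant. Then, as $t\to+\infty$, $$c(g,\Delta_t)=c(g,\Delta,f_0)\,t^{\alpha}(1+o(1)),$$ where $t^\alpha=e^{\alpha\log t}$ with real $\log t$.
   Context: Domains and faces are as usual, and a domain is growing if it is unbounded and $f_0\to+\infty$ at infinity in it. $c(g,\Delta_t)$ is the value of $g$ on the external support of the bounded domain $\Delta_t$ of $A_t$ with respect to $f$; the external support of a bounded face $D$ with respect to an affine function $g$ is the face of highest dimension in the set of points of $\bar D$ where $|g|$ is maximal. Let $W=H_\infty\setminus\overline{\{f_0=0\}}$ in the projective completion $\bar V=V\cup H_\infty$, and $h([v])=f^0(v)/f_0^0(v)$ on $W$, with $f^0$ the linear part. $tr(\Delta)$ is the face of highest dimension among the faces of $\bar A$ lying in $H_\infty$ and contained in the closure of $\Delta$ in $\bar V$; it is a bounded face of the arrangement in $W$ of the non-constant functions $f_i^0/f_0^0$. Let $\Sigma'$ be the external support of $tr(\Delta)$ with respect to $h$. Then $c(g,\Delta,f_0)=\exp(\alpha(\log|h(\Sigma')|+i\theta))$. *)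

theory Defs
  imports "HOL-Analysis.Analysis"
begin

definition afn :: "('v::euclidean_space \<times> real) \<Rightarrow> 'v \<Rightarrow> real" where
  "afn p x = fst p \<bullet> x + snd p"

definition arrangement :: "('v::euclidean_space \<times> real) set \<Rightarrow> bool" where
  "arrangement A \<longleftrightarrow> finite A \<and> (\<forall>p\<in>A. fst p \<noteq> 0)"

definition hyperplanes :: "('v::euclidean_space \<times> real) set \<Rightarrow> 'v set set" where
  "hyperplanes A = (\<lambda>p. {x. afn p x = 0}) ` A"

definition essential :: "('v::euclidean_space \<times> real) set \<Rightarrow> bool" where
  "essential A \<longleftrightarrow> span (fst ` A) = UNIV"

definition domains :: "('v::euclidean_space \<times> real) set \<Rightarrow> 'v set set" where
  "domains A = components (- \<Union>(hyperplanes A))"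

definition arr_faces :: "'v set \<Rightarrow> ('v \<Rightarrow> real) set \<Rightarrow> 'v set set" where
  "arr_faces X Fs = {F. \<exists>x\<in>X. F = {y\<in>X. \<forall>\<phi>\<in>Fs. sgn (\<phi> y) = sgn (\<phi> x)}}"

definition faces :: "('v::euclidean_space \<times> real) set \<Rightarrow> 'v set set" where
  "faces A = arr_faces UNIV (afn ` A)"

definition add_level :: "('v::euclidean_space \<times> real) set \<Rightarrow> ('v \<times> real) \<Rightarrow> real
    \<Rightarrow> ('v \<times> real) set" where
  "add_level A f0 t = insert (fst f0, snd f0 - t) A"

definition growing :: "('v::euclidean_space \<times> real) set \<Rightarrow> ('v \<times> real) \<Rightarrow> 'v set \<Rightarrow> bool" where
  "growing A f0 D \<longleftrightarrow> D \<in> domains A \<and> \<not> bounded D \<and>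
     (\<forall>M. \<exists>R. \<forall>x\<in>D. norm x \<ge> R \<longrightarrow> afn f0 x \<ge> M)"

definition max_abs_set :: "'v::euclidean_space set \<Rightarrow> ('v \<Rightarrow> real) \<Rightarrow> 'v set" where
  "max_abs_set D \<phi> = {x\<in>closure D. \<forall>y\<in>closure D. \<bar>\<phi> y\<bar> \<le> \<bar>\<phi> x\<bar>}"

definition ext_support :: "'v::euclidean_space set set \<Rightarrow> 'v set \<Rightarrow> ('v \<Rightarrow> real) \<Rightarrow> 'v set" where
  "ext_support Fcs D \<phi> = (SOME F. F \<in> Fcs \<and> F \<subseteq> max_abs_set D \<phi> \<and>
      (\<forall>F'\<in>Fcs. F' \<subseteq> max_abs_set D \<phi> \<longrightarrow> aff_dim F' \<le> aff_dim F))"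

definition face_value :: "'v set \<Rightarrow> ('v \<Rightarrow> 'b) \<Rightarrow> 'b" where
  "face_value F \<psi> = \<psi> (SOME x. x \<in> F)"

definition c_bdd :: "('v::euclidean_space \<Rightarrow> complex) \<Rightarrow> ('v \<times> real) set \<Rightarrow> ('v \<times> real)
    \<Rightarrow> 'v set \<Rightarrow> complex" where
  "c_bdd g B f D = face_value (ext_support (faces B) D (afn f)) g"

text \<open>Hyperplane at infinity: the part W = H_\<infinity> \ closure{f0 = 0} is identified with its
  standard affine chart {v. f0^0(v) = 1} (the point [v:0] with f0^0 v \<noteq> 0 is represented
  by v / f0^0 v).\<close>

definition chart :: "('v::euclidean_space \<times> real) \<Rightarrow> 'v set" where
  "chart f0 = {v. fst f0 \<bullet> v = 1}"

text \<open>Points of W in the closure of D in the projective completion: [v:0] is a limit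
  of points [x_n : 1] with x_n \<in> D iff some scalars \<lambda>_n give \<lambda>_n (x_n,1) \<rightarrow> (v,0).\<close>

definition inf_closure :: "('v::euclidean_space \<times> real) \<Rightarrow> 'v set \<Rightarrow> 'v set" where
  "inf_closure f0 D = {v\<in>chart f0. \<exists>x lam. (\<forall>n. x n \<in> D) \<and> lam \<longlonglongrightarrow> 0 \<and>
      (\<lambda>n. lam n *\<^sub>R x n) \<longlonglongrightarrow> v}"

definition hratio :: "('v::euclidean_space \<times> real) \<Rightarrow> ('v \<times> real) \<Rightarrow> 'v \<Rightarrow> real" where
  "hratio f f0 v = (fst f \<bullet> v) / (fst f0 \<bullet> v)"

definition W_fns :: "('v::euclidean_space \<times> real) set \<Rightarrow> ('v \<times> real) \<Rightarrow> ('v \<Rightarrow> real) set" where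
  "W_fns A f0 = {hratio p f0 | p. p \<in> A \<and> \<not> (\<exists>c. \<forall>v\<in>chart f0. hratio p f0 v = c)}"

definition W_faces :: "('v::euclidean_space \<times> real) set \<Rightarrow> ('v \<times> real) \<Rightarrow> 'v set set" where
  "W_faces A f0 = arr_faces (chart f0) (W_fns A f0)"

definition trace_inf :: "('v::euclidean_space \<times> real) set \<Rightarrow> ('v \<times> real) \<Rightarrow> 'v set \<Rightarrow> 'v set" where
  "trace_inf A f0 D = (SOME F. F \<in> W_faces A f0 \<and> F \<subseteq> inf_closure f0 D \<and>
      (\<forall>F'\<in>W_faces A f0. F' \<subseteq> inf_closure f0 D \<longrightarrow> aff_dim F' \<le> aff_dim F))"

definition c_inf :: "complex \<Rightarrow> real \<Rightarrow> ('v::euclidean_space \<times> real) set \<Rightarrow> ('v \<times> real)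
    \<Rightarrow> ('v \<times> real) \<Rightarrow> 'v set \<Rightarrow> complex" where
  "c_inf \<alpha> \<theta> A f f0 D =
     (let \<Sigma>' = ext_support (W_faces A f0) (trace_inf A f0 D) (hratio f f0)
      in exp (\<alpha> * (complex_of_real (ln \<bar>face_value \<Sigma>' (hratio f f0)\<bar>) + \<i> * complex_of_real \<theta>)))"

end

theory Submission
  imports Defs
begin


lemma max_face_exists:
  fixes Fcs :: "'v::euclidean_space set set"
  assumes "F \<in> Fcs" "P F"
  shows "\<exists>F. F \<in> Fcs \<and> P F \<and> (\<forall>F'\<in>Fcs. P F' \<longrightarrow> aff_dim F' \<le> aff_dim F)"
proof -
  let ?S = "{F\<in>Fcs. P F}"
  have sub: "aff_dim ` ?S \<subseteq> {-1..int DIM('v)}"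
    using aff_dim_geq aff_dim_le_DIM by fastforce
  hence fin: "finite (aff_dim ` ?S)" by (rule finite_subset) simp
  have ne: "aff_dim ` ?S \<noteq> {}" using assms by blast
  have "Max (aff_dim ` ?S) \<in> aff_dim ` ?S" using Max_in[OF fin ne] .
  then obtain G where G: "G \<in> ?S" "aff_dim G = Max (aff_dim ` ?S)" by auto
  have "\<forall>F'\<in>Fcs. P F' \<longrightarrow> aff_dim F' \<le> aff_dim G"
    using G(2) Max_ge[OF fin] by auto
  with G(1) show ?thesis by blast
qed

lemma ext_support_prop:
  fixes Fcs :: "'v::euclidean_space set set"
  assumes "F \<in> Fcs" "F \<subseteq> max_abs_set D \<phi>"
  shows "ext_support Fcs D \<phi> \<in> Fcs \<and> ext_support Fcs D \<phi> \<subseteq> max_abs_set D \<phi>"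
proof -
  have "\<exists>F. F \<in> Fcs \<and> F \<subseteq> max_abs_set D \<phi> \<and>
      (\<forall>F'\<in>Fcs. F' \<subseteq> max_abs_set D \<phi> \<longrightarrow> aff_dim F' \<le> aff_dim F)"
    using max_face_exists[of F Fcs "\<lambda>F. F \<subseteq> max_abs_set D \<phi>"] assms by blast
  from someI_ex[OF this] show ?thesis unfolding ext_support_def by blast
qed

lemma arr_faces_point:
  assumes "F \<in> arr_faces X Fs"
  shows "(SOME x. x \<in> F) \<in> F" "F \<subseteq> X"
proof -
  from assms obtain x where "x \<in> X" "F = {y\<in>X. \<forall>\<phi>\<in>Fs. sgn (\<phi> y) = sgn (\<phi> x)}"
    unfolding arr_faces_def by blast
  then have "x \<in> F" by auto
  then show "(SOME x. x \<in> F) \<in> F" by (rule someI)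
  show "F \<subseteq> X" using \<open>F = _\<close> by auto
qed

lemma face_max:
  fixes X :: "'v::euclidean_space set" and Fs :: "('v \<Rightarrow> real) set" and \<phi> :: "'v \<Rightarrow> real"
  assumes fin: "finite Fs"
    and aff: "\<forall>\<psi>\<in>insert \<phi> Fs. \<forall>x\<in>X. \<forall>z\<in>X. \<forall>u. \<psi> ((1-u) *\<^sub>R x + u *\<^sub>R z) = (1-u) * \<psi> x + u * \<psi> z"
    and Xaff: "\<forall>x\<in>X. \<forall>z\<in>X. \<forall>u. (1-u) *\<^sub>R x + u *\<^sub>R z \<in> X"
    and sgn\<phi>: "\<forall>x\<in>X. \<forall>z\<in>X. (\<forall>\<psi>\<in>Fs. sgn (\<psi> x) = sgn (\<psi> z)) \<longrightarrow> sgn (\<phi> x) = sgn (\<phi> z)"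
    and yX: "y \<in> X" and ymax: "y \<in> max_abs_set D \<phi>"
    and cls: "{z\<in>X. \<forall>\<psi>\<in>Fs. sgn (\<psi> z) = sgn (\<psi> y)} \<subseteq> closure D"
  shows "{z\<in>X. \<forall>\<psi>\<in>Fs. sgn (\<psi> z) = sgn (\<psi> y)} \<subseteq> max_abs_set D \<phi>"
proof
  fix z assume zin: "z \<in> {z\<in>X. \<forall>\<psi>\<in>Fs. sgn (\<psi> z) = sgn (\<psi> y)}"
  hence zX: "z \<in> X" and zs: "\<forall>\<psi>\<in>Fs. sgn (\<psi> z) = sgn (\<psi> y)" by auto
  define w where "w = (\<lambda>e::real. (1 - (-e)) *\<^sub>R y + (-e) *\<^sub>R z)"
  have wX: "w e \<in> X" for e using Xaff yX zX unfolding w_def by blast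
  have wval: "\<psi> (w e) = (1 + e) * \<psi> y - e * \<psi> z" if "\<psi> \<in> insert \<phi> Fs" for \<psi> e
  proof -
    have "\<psi> ((1 - (-e)) *\<^sub>R y + (-e) *\<^sub>R z) = (1 - (-e)) * \<psi> y + (-e) * \<psi> z"
      using aff that yX zX by blast
    then show ?thesis unfolding w_def by simp
  qed
  have ev: "\<forall>\<^sub>F e in at_right 0. \<forall>\<psi>\<in>Fs. sgn (\<psi> (w e)) = sgn (\<psi> y)"
  proof (rule eventually_ball_finite[OF fin], rule ballI)
    fix \<psi> assume \<psi>: "\<psi> \<in> Fs"
    have lim: "((\<lambda>e. (1 + e) * \<psi> y - e * \<psi> z) \<longlongrightarrow> (1 + 0) * \<psi> y - 0 * \<psi> z) (at_right 0)"
      by (intro tendsto_intros)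
    show "\<forall>\<^sub>F e in at_right 0. sgn (\<psi> (w e)) = sgn (\<psi> y)"
    proof (cases "\<psi> y = 0")
      case True
      then have "\<psi> z = 0" using zs \<psi> by (metis sgn_0_0)
      then have "\<forall>e. sgn (\<psi> (w e)) = sgn (\<psi> y)" using True wval[of \<psi>] \<psi> by simp
      then show ?thesis by simp
    next
      case False
      show ?thesis
      proof (cases "\<psi> y > 0")
        case True
        have "\<forall>\<^sub>F e in at_right 0. (1 + e) * \<psi> y - e * \<psi> z > 0"
          using order_tendstoD(1)[OF lim, of 0] True by simp
        then show ?thesis by eventually_elim (use True wval[of \<psi>] \<psi> in simp)
      next
        case False2: False
        hence neg: "\<psi> y < 0" using False by simp
        have "\<forall>\<^sub>F e in at_right 0. (1 + e) * \<psi> y - e * \<psi> z < 0"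
          using order_tendstoD(2)[OF lim, of 0] neg by simp
        then show ?thesis by eventually_elim (use neg wval[of \<psi>] \<psi> in simp)
      qed
    qed
  qed
  then obtain b where b: "b > 0" "\<forall>e>0. e < b \<longrightarrow> (\<forall>\<psi>\<in>Fs. sgn (\<psi> (w e)) = sgn (\<psi> y))"
    unfolding eventually_at_right_field by auto
  define e where "e = b / 2"
  have e: "e > 0" "e < b" using b unfolding e_def by auto
  have "w e \<in> closure D" using cls wX b(2) e by auto
  then have wle: "\<bar>\<phi> (w e)\<bar> \<le> \<bar>\<phi> y\<bar>" using ymax unfolding max_abs_set_def by auto
  have wv: "\<phi> (w e) = (1 + e) * \<phi> y - e * \<phi> z" using wval by simp
  have sg: "sgn (\<phi> z) = sgn (\<phi> y)" using sgn\<phi> zX yX zs by blast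
  have ge: "\<bar>\<phi> y\<bar> \<le> \<bar>\<phi> z\<bar>"
  proof (cases "\<phi> y > 0")
    case True
    then have zp: "\<phi> z > 0" using sg by (metis sgn_greater)
    have "(1 + e) * \<phi> y - e * \<phi> z \<le> \<phi> y" using wle wv True by linarith
    then have "e * \<phi> y \<le> e * \<phi> z" by (simp add: algebra_simps)
    then have "\<phi> y \<le> \<phi> z" using e(1) by simp
    then show ?thesis using True zp by simp
  next
    case False
    show ?thesis
    proof (cases "\<phi> y < 0")
      case True
      then have zn: "\<phi> z < 0" using sg by (metis sgn_less)
      have "-((1 + e) * \<phi> y - e * \<phi> z) \<le> - \<phi> y" using wle wv True by linarith
      then have "e * \<phi> z \<le> e * \<phi> y" by (simp add: algebra_simps)
      then have "\<phi> z \<le> \<phi> y" using e(1) by simp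
      then show ?thesis using True zn by simp
    next
      case False
      then show ?thesis using \<open>\<not> \<phi> y > 0\<close> by simp
    qed
  qed
  have zD: "z \<in> closure D" using cls zin by blast
  show "z \<in> max_abs_set D \<phi>"
    using ymax zD ge unfolding max_abs_set_def by force
qed




lemma afn_comb: "afn p ((1-u) *\<^sub>R x + u *\<^sub>R y) = (1-u) * afn p x + u * afn p y"
  unfolding afn_def by (simp add: inner_add_right algebra_simps)

lemma afn_ray: "afn p (x + r *\<^sub>R v) = afn p x + r * (fst p \<bullet> v)"
  unfolding afn_def by (simp add: inner_add_right algebra_simps)

lemma seg_closure:
  fixes z d :: "'a::real_normed_vector"
  assumes "\<forall>\<delta>. 0 < \<delta> \<and> \<delta> \<le> 1 \<longrightarrow> (1-\<delta>) *\<^sub>R z + \<delta> *\<^sub>R d \<in> S"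
  shows "z \<in> closure S"
proof (rule closure_approachable[THEN iffD2], intro allI impI)
  fix e :: real assume e: "e > 0"
  define \<delta> where "\<delta> = min 1 (e / (norm (d - z) + 1))"
  have "0 < e / (norm (d - z) + 1)" using e by (simp add: add_nonneg_pos)
  then have d: "0 < \<delta>" "\<delta> \<le> 1" using e unfolding \<delta>_def by auto
  have "dist ((1-\<delta>) *\<^sub>R z + \<delta> *\<^sub>R d) z = \<delta> * norm (d - z)"
    using d unfolding dist_norm by (simp add: algebra_simps flip: scaleR_diff_right)
  also have "\<dots> \<le> e / (norm (d - z) + 1) * norm (d - z)"
    using d unfolding \<delta>_def by (intro mult_right_mono) auto
  also have "\<dots> < e"
  proof -
    have "norm (d - z) / (norm (d - z) + 1) < 1"
      by (subst divide_less_eq_1_pos) (auto simp: add_nonneg_pos)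
    then have "e * (norm (d - z) / (norm (d - z) + 1)) < e * 1" using e by (intro mult_strict_left_mono) auto
    then show ?thesis by simp
  qed
  finally show "\<exists>y\<in>S. dist y z < e" using assms d by blast
qed

locale cor1 =
  fixes A :: "('v::euclidean_space \<times> real) set" and f0 f :: "'v \<times> real" and \<Delta> :: "'v set"
  assumes arr: "arrangement A" and fA: "f \<in> A" and gr: "growing A f0 \<Delta>"
    and unb: "\<not> bounded ((\<lambda>x. \<bar>afn f x\<bar>) ` \<Delta>)"
begin

definition "d0 = (SOME x. x \<in> \<Delta>)"
definition "s p = sgn (afn p d0)"
definition "Sg p x = s p * afn p x"
definition "Dc = {x. \<forall>p\<in>A. 0 \<le> Sg p x}"
definition "Cn = {u. \<forall>p\<in>A. 0 \<le> s p * (fst p \<bullet> u)}"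
definition "K = {v. fst f0 \<bullet> v = 1 \<and> (\<forall>p\<in>A. 0 \<le> s p * (fst p \<bullet> v))}"

lemma finA: "finite A" using arr unfolding arrangement_def by auto

lemma comp: "\<Delta> \<in> components (- \<Union>(hyperplanes A))"
  using gr unfolding growing_def domains_def by auto

lemma d0: "d0 \<in> \<Delta>"
proof -
  have "\<Delta> \<noteq> {}" using comp in_components_nonempty by blast
  then obtain x where "x \<in> \<Delta>" by blast
  then show ?thesis unfolding d0_def by (rule someI)
qed

lemma nonzero: "x \<in> \<Delta> \<Longrightarrow> p \<in> A \<Longrightarrow> afn p x \<noteq> 0"
  using in_components_subset[OF comp] unfolding hyperplanes_def by blast

lemma s_pm: assumes "p \<in> A" shows "s p = 1 \<or> s p = -1"
  using nonzero[OF d0 assms] unfolding s_def by (auto simp: sgn_if)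

lemma Sg_d0: assumes "p \<in> A" shows "0 < Sg p d0"
  using nonzero[OF d0 assms] unfolding Sg_def s_def by (auto simp: sgn_if)

lemma Delta_eq: "\<Delta> = {x. \<forall>p\<in>A. 0 < Sg p x}"
proof
  show "\<Delta> \<subseteq> {x. \<forall>p\<in>A. 0 < Sg p x}"
  proof (clarify)
    fix x p assume x: "x \<in> \<Delta>" and p: "p \<in> A"
    show "0 < Sg p x"
    proof (rule ccontr)
      assume "\<not> 0 < Sg p x"
      with nonzero[OF x p] Sg_d0[OF p] s_pm[OF p]
      have opp: "(afn p x < 0 \<and> afn p d0 > 0) \<or> (afn p x > 0 \<and> afn p d0 < 0)"
        unfolding Sg_def by (auto simp: mult_less_0_iff zero_less_mult_iff)
      have conn: "connected \<Delta>" using comp in_components_connected by blast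
      have "\<exists>z\<in>\<Delta>. fst p \<bullet> z = - snd p"
      proof (cases "afn p x < 0")
        case True
        then show ?thesis using opp connected_ivt_hyperplane[OF conn x d0, of "fst p" "- snd p"]
          unfolding afn_def by auto
      next
        case False
        then show ?thesis using opp connected_ivt_hyperplane[OF conn d0 x, of "fst p" "- snd p"]
          unfolding afn_def by auto
      qed
      then obtain z where "z \<in> \<Delta>" "afn p z = 0" unfolding afn_def by auto
      then show False using nonzero p by blast
    qed
  qed
next
  let ?S = "{x. \<forall>p\<in>A. 0 < Sg p x}"
  have cvx: "convex ?S"
  proof (rule convexI, clarify)
    fix x y :: 'v and u v :: real and p
    assume xy: "\<forall>p\<in>A. 0 < Sg p x" "\<forall>p\<in>A. 0 < Sg p y" and uv: "0 \<le> u" "0 \<le> v" "u + v = 1"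
      and p: "p \<in> A"
    have u: "u = 1 - v" using uv by simp
    have "Sg p (u *\<^sub>R x + v *\<^sub>R y) = u * Sg p x + v * Sg p y"
      unfolding u Sg_def afn_comb by (simp add: algebra_simps)
    moreover have "u * Sg p x + v * Sg p y > 0"
    proof (cases "u = 0")
      case True then show ?thesis using uv xy p by simp
    next
      case False
      then have "u > 0" using uv by simp
      then have "u * Sg p x > 0" "v * Sg p y \<ge> 0" using uv xy p by auto
      then show ?thesis by linarith
    qed
    ultimately show "0 < Sg p (u *\<^sub>R x + v *\<^sub>R y)" by simp
  qed
  have sub: "?S \<subseteq> - \<Union>(hyperplanes A)"
    unfolding hyperplanes_def Sg_def by fastforce
  have "d0 \<in> ?S" using Sg_d0 by auto
  then have "\<Delta> \<inter> ?S \<noteq> {}" using d0 by blast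
  then show "?S \<subseteq> \<Delta>"
    using components_maximal[OF comp convex_connected[OF cvx] sub] by blast
qed


lemma Sg_comb: "Sg p ((1-u) *\<^sub>R x + u *\<^sub>R y) = (1-u) * Sg p x + u * Sg p y"
  unfolding Sg_def afn_comb by (simp add: algebra_simps)

lemma Sg_ray: "Sg p (x + r *\<^sub>R v) = Sg p x + r * (s p * (fst p \<bullet> v))"
  unfolding Sg_def afn_ray by (simp add: algebra_simps)

lemma cont_afn[continuous_intros]: "continuous_on S (afn p)"
  unfolding afn_def by (intro continuous_intros)

lemma closed_Dc: "closed Dc"
proof -
  have "Dc = (\<Inter>p\<in>A. {x. 0 \<le> Sg p x})" unfolding Dc_def by auto
  moreover have "closed {x. 0 \<le> Sg p x}" for p
    unfolding Sg_def by (intro closed_Collect_le continuous_intros)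
  ultimately show ?thesis by auto
qed

lemma Delta_sub_Dc: "\<Delta> \<subseteq> Dc"
  unfolding Dc_def by (subst Delta_eq) (auto simp: less_imp_le)

lemma Dc_eq: "closure \<Delta> = Dc"
proof
  show "closure \<Delta> \<subseteq> Dc" using closure_minimal[OF Delta_sub_Dc closed_Dc] .
  show "Dc \<subseteq> closure \<Delta>"
  proof
    fix z assume z: "z \<in> Dc"
    show "z \<in> closure \<Delta>"
    proof (rule seg_closure[where d = d0], intro allI impI)
      fix \<delta> :: real assume \<delta>: "0 < \<delta> \<and> \<delta> \<le> 1"
      have "\<forall>p\<in>A. 0 < Sg p ((1-\<delta>) *\<^sub>R z + \<delta> *\<^sub>R d0)"
      proof
        fix p assume p: "p \<in> A"
        have "(1-\<delta>) * Sg p z \<ge> 0" using z p \<delta> unfolding Dc_def by auto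
        moreover have "\<delta> * Sg p d0 > 0" using Sg_d0[OF p] \<delta> by auto
        ultimately show "0 < Sg p ((1-\<delta>) *\<^sub>R z + \<delta> *\<^sub>R d0)" unfolding Sg_comb by linarith
      qed
      then show "(1-\<delta>) *\<^sub>R z + \<delta> *\<^sub>R d0 \<in> \<Delta>" using Delta_eq by blast
    qed
  qed
qed

lemma grow_cl: "\<exists>R. \<forall>x\<in>Dc. R < norm x \<longrightarrow> M \<le> afn f0 x"
proof -
  obtain R where R: "\<forall>x\<in>\<Delta>. norm x \<ge> R \<longrightarrow> afn f0 x \<ge> M"
    using gr unfolding growing_def by blast
  have sub: "\<Delta> \<subseteq> {x. norm x \<le> R} \<union> {x. M \<le> afn f0 x}" using R by force
  have cl: "closed ({x. norm x \<le> R} \<union> {x. M \<le> afn f0 x})"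
    by (intro closed_Un closed_Collect_le continuous_intros)
  have "Dc \<subseteq> {x. norm x \<le> R} \<union> {x. M \<le> afn f0 x}"
    using closure_minimal[OF sub cl] Dc_eq by simp
  then have "\<forall>x\<in>Dc. R < norm x \<longrightarrow> M \<le> afn f0 x" by fastforce
  then show ?thesis by blast
qed

lemma ray_Delta: "x \<in> \<Delta> \<Longrightarrow> u \<in> Cn \<Longrightarrow> r \<ge> 0 \<Longrightarrow> x + r *\<^sub>R u \<in> \<Delta>"
proof -
  assume x: "x \<in> \<Delta>" and u: "u \<in> Cn" and r: "r \<ge> 0"
  have "\<forall>p\<in>A. 0 < Sg p (x + r *\<^sub>R u)"
  proof
    fix p assume p: "p \<in> A"
    have "0 < Sg p x" using x p Delta_eq by blast
    moreover have "0 \<le> r * (s p * (fst p \<bullet> u))" using u p r unfolding Cn_def by auto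
    ultimately show "0 < Sg p (x + r *\<^sub>R u)" unfolding Sg_ray by linarith
  qed
  then show ?thesis using Delta_eq by blast
qed

lemma L1: assumes u: "u \<in> Cn" "u \<noteq> 0" shows "fst f0 \<bullet> u > 0"
proof -
  obtain R where R: "\<forall>x\<in>\<Delta>. norm x \<ge> R \<longrightarrow> afn f0 x \<ge> afn f0 d0 + 1"
    using gr unfolding growing_def by blast
  define r where "r = (\<bar>R\<bar> + norm d0) / norm u"
  have r: "r \<ge> 0" unfolding r_def by auto
  have "norm (r *\<^sub>R u) = \<bar>R\<bar> + norm d0" unfolding r_def using u by simp
  moreover have "norm (d0 + r *\<^sub>R u) \<ge> norm (r *\<^sub>R u) - norm d0"
    by (metis add.commute norm_diff_ineq)
  ultimately have "norm (d0 + r *\<^sub>R u) \<ge> R" by linarith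
  then have "afn f0 (d0 + r *\<^sub>R u) \<ge> afn f0 d0 + 1" using R ray_Delta[OF d0 u(1) r] by blast
  then have "r * (fst f0 \<bullet> u) \<ge> 1" unfolding afn_ray by simp
  then show ?thesis using r by (smt (verit) mult_nonneg_nonpos)
qed

lemma seqlemma:
  assumes X: "\<forall>n. X n \<in> Dc" and lim: "filterlim (\<lambda>n. norm (X n)) at_top sequentially"
  shows "\<exists>r u. strict_mono r \<and> norm u = 1 \<and> u \<in> Cn \<and>
    filterlim (\<lambda>n. norm (X (r n))) at_top sequentially \<and>
    (\<forall>q. (\<lambda>n. afn q (X (r n)) / norm (X (r n))) \<longlonglongrightarrow> fst q \<bullet> u)"
proof -
  define Y where "Y n = sgn (X n)" for n
  have "\<forall>n. Y n \<in> cball 0 1" unfolding Y_def by (simp add: norm_sgn)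
  then obtain u r where ur: "strict_mono r" "(Y \<circ> r) \<longlonglongrightarrow> u"
    using seq_compactE[OF compact_imp_seq_compact[OF compact_cball]] by metis
  have lim2: "filterlim (\<lambda>n. norm (X (r n))) at_top sequentially"
    using filterlim_compose[OF lim filterlim_subseq[OF ur(1)]] by (simp add: o_def)
  have evpos: "\<forall>\<^sub>F n in sequentially. norm (X (r n)) > 0"
    using lim2 unfolding filterlim_at_top_dense by (metis (mono_tags, lifting) eventually_mono)
  have "(\<lambda>n. norm (Y (r n))) \<longlonglongrightarrow> norm u"
    using tendsto_norm[OF ur(2)] by (simp add: o_def)
  moreover have "\<forall>\<^sub>F n in sequentially. norm (Y (r n)) = 1"
    using evpos by eventually_elim (simp add: Y_def norm_sgn)
  ultimately have "((\<lambda>n. 1::real) \<longlonglongrightarrow> norm u)"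
    by (rule Lim_transform_eventually)
  then have nu: "norm u = 1" using LIMSEQ_unique tendsto_const by blast
  have conv: "(\<lambda>n. afn q (X (r n)) / norm (X (r n))) \<longlonglongrightarrow> fst q \<bullet> u" for q
  proof -
    have "(\<lambda>n. fst q \<bullet> Y (r n) + snd q / norm (X (r n))) \<longlonglongrightarrow> fst q \<bullet> u + 0"
      using ur(2) filterlim_at_top_imp_at_infinity[OF lim2]
      by (intro tendsto_intros tendsto_divide_0[where c = "snd q"]) (auto simp: o_def)
    moreover have "\<forall>\<^sub>F n in sequentially. fst q \<bullet> Y (r n) + snd q / norm (X (r n))
        = afn q (X (r n)) / norm (X (r n))"
      using evpos by eventually_elim (simp add: Y_def afn_def sgn_div_norm add_divide_distrib divide_inverse_commute distrib_left)
    ultimately show ?thesis by (simp add: Lim_transform_eventually)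
  qed
  have "u \<in> Cn" unfolding Cn_def mem_Collect_eq
  proof (intro ballI)
    fix p assume p: "p \<in> A"
    have lim3: "(\<lambda>n. s p * (afn p (X (r n)) / norm (X (r n)))) \<longlonglongrightarrow> s p * (fst p \<bullet> u)"
      by (intro tendsto_intros conv)
    have "\<forall>n. 0 \<le> s p * (afn p (X (r n)) / norm (X (r n)))"
      using X p unfolding Dc_def Sg_def by auto
    then show "0 \<le> s p * (fst p \<bullet> u)"
      using tendsto_lowerbound[OF lim3] by auto
  qed
  then show ?thesis using ur(1) nu conv lim2 by blast
qed

end



context cor1
begin

lemma K_sub_Cn: "K \<subseteq> Cn" unfolding K_def Cn_def by auto

lemma scale_K: assumes "u \<in> Cn" "u \<noteq> 0" shows "(1 / (fst f0 \<bullet> u)) *\<^sub>R u \<in> K"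
proof -
  have pos: "fst f0 \<bullet> u > 0" using L1 assms by blast
  have "\<forall>p\<in>A. 0 \<le> s p * (fst p \<bullet> ((1 / (fst f0 \<bullet> u)) *\<^sub>R u))"
  proof
    fix p assume "p \<in> A"
    then have "0 \<le> s p * (fst p \<bullet> u)" using assms unfolding Cn_def by auto
    then show "0 \<le> s p * (fst p \<bullet> ((1 / (fst f0 \<bullet> u)) *\<^sub>R u))"
      using pos by (simp add: mult.left_commute)
  qed
  then show ?thesis unfolding K_def using pos by simp
qed

lemma K_ne: "K \<noteq> {}"
proof -
  have "\<not> bounded \<Delta>" using gr unfolding growing_def by auto
  then have "\<forall>n::nat. \<exists>x\<in>\<Delta>. real n < norm x" unfolding bounded_iff by (meson not_le)
  then obtain X where X: "\<forall>n. X n \<in> \<Delta> \<and> real n < norm (X n)" by metis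
  have "filterlim (\<lambda>n. norm (X n)) at_top sequentially"
    by (rule filterlim_at_top_mono[OF filterlim_real_sequentially]) (use X in \<open>auto intro: less_imp_le always_eventually\<close>)
  moreover have "\<forall>n. X n \<in> Dc" using X Delta_sub_Dc by blast
  ultimately obtain u where "norm u = 1" "u \<in> Cn" using seqlemma by blast
  then have "(1 / (fst f0 \<bullet> u)) *\<^sub>R u \<in> K" using scale_K by fastforce
  then show ?thesis by blast
qed

lemma K_bd: "bounded K"
proof (rule ccontr)
  assume "\<not> bounded K"
  then have "\<forall>n::nat. \<exists>v\<in>K. real n < norm v" unfolding bounded_iff by (meson not_le)
  then obtain V where V: "\<forall>n. V n \<in> K \<and> real n < norm (V n)" by metis
  define X where "X n = d0 + 1 *\<^sub>R V n" for n
  have XD: "X n \<in> \<Delta>" for n unfolding X_def using ray_Delta[OF d0, of "V n" 1] V K_sub_Cn by auto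
  have "norm (X n) \<ge> - norm d0 + real n" for n
  proof -
    have "norm (X n) \<ge> norm (V n) - norm d0" unfolding X_def
      by (metis add.commute norm_diff_ineq scaleR_one)
    then show ?thesis using V by smt
  qed
  then have "filterlim (\<lambda>n. norm (X n)) at_top sequentially"
    by (intro filterlim_at_top_mono[OF filterlim_tendsto_add_at_top[OF tendsto_const[of "- norm d0"] filterlim_real_sequentially]])
      (auto intro: always_eventually)
  moreover have "\<forall>n. X n \<in> Dc" using XD Delta_sub_Dc by blast
  ultimately obtain r u where ru: "norm u = 1" "u \<in> Cn"
    "filterlim (\<lambda>n. norm (X (r n))) at_top sequentially"
    "(\<lambda>n. afn f0 (X (r n)) / norm (X (r n))) \<longlonglongrightarrow> fst f0 \<bullet> u"
    using seqlemma by blast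
  have "afn f0 (X n) = afn f0 d0 + 1" for n
    unfolding X_def afn_ray using V unfolding K_def by auto
  then have "(\<lambda>n. afn f0 (X (r n)) / norm (X (r n))) \<longlonglongrightarrow> 0"
    using tendsto_divide_0[OF tendsto_const filterlim_at_top_imp_at_infinity[OF ru(3)]] by simp
  then have "fst f0 \<bullet> u = 0" using ru(4) LIMSEQ_unique by blast
  moreover have "u \<noteq> 0" using ru(1) by auto
  then have "fst f0 \<bullet> u > 0" using L1[OF ru(2)] by blast
  ultimately show False by simp
qed

lemma K_closed: "closed K"
proof -
  have "K = {v. fst f0 \<bullet> v = 1} \<inter> (\<Inter>p\<in>A. {v. 0 \<le> s p * (fst p \<bullet> v)})" unfolding K_def by auto
  moreover have "closed {v. 0 \<le> s p * (fst p \<bullet> v)}" for p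
    by (intro closed_Collect_le continuous_intros)
  moreover have "closed {v. fst f0 \<bullet> v = 1}" by (intro closed_Collect_eq continuous_intros)
  ultimately show ?thesis by (simp add: closed_INT closed_Int)
qed

lemma K_comb: assumes "x \<in> K" "y \<in> K" "0 \<le> u" "u \<le> 1" shows "(1-u) *\<^sub>R x + u *\<^sub>R y \<in> K"
proof -
  have "\<forall>p\<in>A. 0 \<le> s p * (fst p \<bullet> ((1-u) *\<^sub>R x + u *\<^sub>R y))"
  proof
    fix p assume p: "p \<in> A"
    have "s p * (fst p \<bullet> ((1-u) *\<^sub>R x + u *\<^sub>R y)) = (1-u) * (s p * (fst p \<bullet> x)) + u * (s p * (fst p \<bullet> y))"
      by (simp add: inner_add_right algebra_simps)
    moreover have "0 \<le> (1-u) * (s p * (fst p \<bullet> x))" "0 \<le> u * (s p * (fst p \<bullet> y))"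
      using assms p unfolding K_def by auto
    ultimately show "0 \<le> s p * (fst p \<bullet> ((1-u) *\<^sub>R x + u *\<^sub>R y))" by linarith
  qed
  moreover have "fst f0 \<bullet> ((1-u) *\<^sub>R x + u *\<^sub>R y) = 1"
    using assms unfolding K_def by (simp add: inner_add_right algebra_simps)
  ultimately show ?thesis unfolding K_def by simp
qed

definition "vstar = (SOME v. v \<in> K \<and> (\<forall>w\<in>K. \<bar>fst f \<bullet> w\<bar> \<le> \<bar>fst f \<bullet> v\<bar>))"
definition "Mstar = \<bar>fst f \<bullet> vstar\<bar>"

lemma vstar: "vstar \<in> K" "\<forall>w\<in>K. \<bar>fst f \<bullet> w\<bar> \<le> Mstar"
proof -
  have "\<exists>v\<in>K. \<forall>w\<in>K. \<bar>fst f \<bullet> w\<bar> \<le> \<bar>fst f \<bullet> v\<bar>"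
    by (rule continuous_attains_sup) (use K_bd K_closed K_ne in \<open>auto simp: compact_eq_bounded_closed intro!: continuous_intros\<close>)
  then have ex: "\<exists>v. v \<in> K \<and> (\<forall>w\<in>K. \<bar>fst f \<bullet> w\<bar> \<le> \<bar>fst f \<bullet> v\<bar>)" by blast
  have "vstar \<in> K \<and> (\<forall>w\<in>K. \<bar>fst f \<bullet> w\<bar> \<le> \<bar>fst f \<bullet> vstar\<bar>)"
    unfolding vstar_def by (rule someI_ex[OF ex])
  then show "vstar \<in> K" "\<forall>w\<in>K. \<bar>fst f \<bullet> w\<bar> \<le> Mstar" unfolding Mstar_def by auto
qed

lemma lowerbdd: assumes w: "\<forall>u\<in>Cn. 0 \<le> w \<bullet> u" shows "\<exists>c. \<forall>x\<in>\<Delta>. c \<le> w \<bullet> x"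
proof -
  define Q where "Q = {w. \<exists>c. \<forall>x\<in>\<Delta>. c \<le> w \<bullet> x}"
  define G where "G = (\<lambda>p. s p *\<^sub>R fst p) ` A"
  have cc: "convex_cone Q" unfolding convex_cone_iff
  proof (intro conjI ballI allI impI)
    show "0 \<in> Q" unfolding Q_def by auto
  next
    fix x y assume "x \<in> Q" "y \<in> Q"
    then obtain c1 c2 where "\<forall>z\<in>\<Delta>. c1 \<le> x \<bullet> z" "\<forall>z\<in>\<Delta>. c2 \<le> y \<bullet> z" unfolding Q_def by auto
    then have "\<forall>z\<in>\<Delta>. c1 + c2 \<le> (x + y) \<bullet> z" by (simp add: inner_add_left add_mono)
    then show "x + y \<in> Q" unfolding Q_def by blast
  next
    fix x and c :: real assume "x \<in> Q" "0 \<le> c"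
    then obtain c1 where "\<forall>z\<in>\<Delta>. c1 \<le> x \<bullet> z" unfolding Q_def by auto
    then have "\<forall>z\<in>\<Delta>. c * c1 \<le> (c *\<^sub>R x) \<bullet> z" using \<open>0 \<le> c\<close> by (simp add: mult_left_mono)
    then show "c *\<^sub>R x \<in> Q" unfolding Q_def by blast
  qed
  have GQ: "G \<subseteq> Q"
  proof
    fix g assume "g \<in> G"
    then obtain p where p: "p \<in> A" "g = s p *\<^sub>R fst p" unfolding G_def by auto
    have "\<forall>x\<in>\<Delta>. - (s p * snd p) \<le> g \<bullet> x"
    proof
      fix x assume "x \<in> \<Delta>"
      then have "0 < Sg p x" using Delta_eq p by blast
      then show "- (s p * snd p) \<le> g \<bullet> x" using p unfolding Sg_def afn_def by (simp add: algebra_simps)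
    qed
    then show "g \<in> Q" unfolding Q_def by blast
  qed
  have hullQ: "convex_cone hull G \<subseteq> Q" using hull_minimal[of G Q convex_cone] GQ cc by blast
  have finG: "finite G" unfolding G_def using finA by simp
  have "w \<in> convex_cone hull G"
  proof (rule ccontr)
    assume nin: "w \<notin> convex_cone hull G"
    obtain a b where ab: "a \<bullet> w < b" "\<forall>x\<in>convex_cone hull G. b < a \<bullet> x"
      using separating_hyperplane_closed_point[OF convex_convex_cone_hull closed_convex_cone_hull[OF finG] nin]
      by blast
    have b: "b < 0" using ab(2) convex_cone_hull_contains_0 by force
    have "a \<in> Cn" unfolding Cn_def
    proof (simp only: mem_Collect_eq, intro ballI)
      fix p assume p: "p \<in> A"
      define g where "g = s p *\<^sub>R fst p"
      have gh: "g \<in> convex_cone hull G" unfolding g_def G_def using p by (intro hull_inc) auto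
      have sc: "c *\<^sub>R g \<in> convex_cone hull G" if "c \<ge> 0" for c
        using convex_cone_convex_cone_hull[of G] gh that unfolding convex_cone_iff by blast
      have "0 \<le> a \<bullet> g"
      proof (rule ccontr)
        assume neg: "\<not> 0 \<le> a \<bullet> g"
        define c where "c = b / (a \<bullet> g)"
        have "c \<ge> 0" unfolding c_def using neg b by (simp add: divide_nonpos_neg less_imp_le)
        then have "b < a \<bullet> (c *\<^sub>R g)" using ab(2) sc by blast
        moreover have "a \<bullet> (c *\<^sub>R g) = b" unfolding c_def using neg by simp
        ultimately show False by simp
      qed
      then show "0 \<le> s p * (fst p \<bullet> a)" unfolding g_def by (simp add: inner_commute)
    qed
    then have "0 \<le> w \<bullet> a" using w by blast
    then show False using ab(1) b by (simp add: inner_commute)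
  qed
  then have "w \<in> Q" using hullQ by blast
  then show ?thesis unfolding Q_def by blast
qed

lemma Mpos: "Mstar > 0"
proof (rule ccontr)
  assume "\<not> Mstar > 0"
  then have z: "\<forall>v\<in>K. fst f \<bullet> v = 0" using vstar(2) by force
  have zc: "\<forall>u\<in>Cn. fst f \<bullet> u = 0"
  proof
    fix u assume u: "u \<in> Cn"
    show "fst f \<bullet> u = 0"
    proof (cases "u = 0")
      case False
      then have "fst f \<bullet> ((1 / (fst f0 \<bullet> u)) *\<^sub>R u) = 0" using z scale_K u by blast
      moreover have "fst f0 \<bullet> u > 0" using L1 u False by blast
      ultimately show ?thesis by simp
    qed simp
  qed
  obtain c1 where c1: "\<forall>x\<in>\<Delta>. c1 \<le> fst f \<bullet> x" using lowerbdd[of "fst f"] zc by force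
  obtain c2 where c2: "\<forall>x\<in>\<Delta>. c2 \<le> (- fst f) \<bullet> x" using lowerbdd[of "- fst f"] zc by force
  have "\<forall>y\<in>(\<lambda>x. \<bar>afn f x\<bar>) ` \<Delta>. norm y \<le> \<bar>c1\<bar> + \<bar>c2\<bar> + \<bar>snd f\<bar>"
  proof
    fix y assume "y \<in> (\<lambda>x. \<bar>afn f x\<bar>) ` \<Delta>"
    then obtain x where x: "x \<in> \<Delta>" "y = \<bar>afn f x\<bar>" by auto
    have "c1 \<le> fst f \<bullet> x" "c2 \<le> - (fst f \<bullet> x)" using c1 c2 x by auto
    then show "norm y \<le> \<bar>c1\<bar> + \<bar>c2\<bar> + \<bar>snd f\<bar>" using x unfolding afn_def by auto
  qed
  then have "bounded ((\<lambda>x. \<bar>afn f x\<bar>) ` \<Delta>)" unfolding bounded_iff by blast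
  then show False using unb by simp
qed

end



lemma sgn_transfer:
  fixes a b s :: real
  assumes "s = 1 \<or> s = -1" "sgn a = sgn b" "0 \<le> s * b"
  shows "0 \<le> s * a"
  using assms by (auto simp: sgn_if split: if_splits)

lemma sgn_pos_s:
  fixes a s :: real
  assumes "s = 1 \<or> s = -1" "0 < s * a"
  shows "sgn a = s"
  using assms by (auto simp: sgn_if zero_less_mult_iff)

lemma chart_comb: "x \<in> chart f0 \<Longrightarrow> z \<in> chart f0 \<Longrightarrow> (1-u) *\<^sub>R x + u *\<^sub>R z \<in> chart f0"
  unfolding chart_def by (simp add: inner_add_right algebra_simps)

lemma hratio_chart: "v \<in> chart f0 \<Longrightarrow> hratio p f0 v = fst p \<bullet> v"
  unfolding chart_def hratio_def by simp

lemma hratio_comb: "x \<in> chart f0 \<Longrightarrow> z \<in> chart f0 \<Longrightarrow>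
   hratio q f0 ((1-u) *\<^sub>R x + u *\<^sub>R z) = (1-u) * hratio q f0 x + u * hratio q f0 z"
  using chart_comb[of x f0 z u] by (simp add: hratio_chart inner_add_right algebra_simps)

context cor1
begin

lemma K_chart: "K = {v\<in>chart f0. \<forall>p\<in>A. 0 \<le> s p * (fst p \<bullet> v)}"
  unfolding K_def chart_def by auto

lemma f0_lower: "\<exists>L. \<forall>x\<in>\<Delta>. L \<le> fst f0 \<bullet> x"
proof -
  obtain R where R: "\<forall>x\<in>\<Delta>. norm x \<ge> R \<longrightarrow> afn f0 x \<ge> 0"
    using gr unfolding growing_def by blast
  have "\<forall>x\<in>\<Delta>. min (- snd f0) (-(norm (fst f0) * \<bar>R\<bar>)) \<le> fst f0 \<bullet> x"
  proof
    fix x assume x: "x \<in> \<Delta>"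
    show "min (- snd f0) (-(norm (fst f0) * \<bar>R\<bar>)) \<le> fst f0 \<bullet> x"
    proof (cases "norm x \<ge> R")
      case True then show ?thesis using R x unfolding afn_def by force
    next
      case False
      have "\<bar>fst f0 \<bullet> x\<bar> \<le> norm (fst f0) * norm x" by (rule Cauchy_Schwarz_ineq2)
      also have "\<dots> \<le> norm (fst f0) * \<bar>R\<bar>" using False by (intro mult_left_mono) auto
      finally show ?thesis by linarith
    qed
  qed
  then show ?thesis by blast
qed

lemma inf_closure_eq: "inf_closure f0 \<Delta> = K"
proof
  show "K \<subseteq> inf_closure f0 \<Delta>"
  proof
    fix v assume v: "v \<in> K"
    define x where "x n = d0 + real (Suc n) *\<^sub>R v" for n
    define lam where "lam n = inverse (real (Suc n))" for n
    have xD: "\<forall>n. x n \<in> \<Delta>" unfolding x_def using ray_Delta[OF d0] v K_sub_Cn by auto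
    have l0: "lam \<longlonglongrightarrow> 0" unfolding lam_def by (rule LIMSEQ_inverse_real_of_nat)
    have eq: "lam n *\<^sub>R x n = lam n *\<^sub>R d0 + v" for n unfolding lam_def x_def
      by (simp add: scaleR_add_right)
    have "(\<lambda>n. lam n *\<^sub>R d0 + v) \<longlonglongrightarrow> 0 *\<^sub>R d0 + v"
      by (intro tendsto_intros l0)
    then have "(\<lambda>n. lam n *\<^sub>R x n) \<longlonglongrightarrow> v" unfolding eq by simp
    moreover have "v \<in> chart f0" using v unfolding K_chart by auto
    ultimately show "v \<in> inf_closure f0 \<Delta>" unfolding inf_closure_def using xD l0 by blast
  qed
next
  show "inf_closure f0 \<Delta> \<subseteq> K"
  proof
    fix v assume "v \<in> inf_closure f0 \<Delta>"
    then obtain x lam where v: "v \<in> chart f0" and x: "\<forall>n. x n \<in> \<Delta>" and l0: "lam \<longlonglongrightarrow> 0"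
      and lv: "(\<lambda>n. lam n *\<^sub>R x n) \<longlonglongrightarrow> v"
      unfolding inf_closure_def by blast
    obtain L where L: "\<forall>x\<in>\<Delta>. L \<le> fst f0 \<bullet> x" using f0_lower by blast
    have "(\<lambda>n. fst f0 \<bullet> (lam n *\<^sub>R x n)) \<longlonglongrightarrow> fst f0 \<bullet> v" by (intro tendsto_intros lv)
    then have l1: "(\<lambda>n. lam n * (fst f0 \<bullet> x n)) \<longlonglongrightarrow> 1" using v unfolding chart_def by simp
    have e1: "\<forall>\<^sub>F n in sequentially. lam n * (fst f0 \<bullet> x n) > 1/2"
      using order_tendstoD(1)[OF l1, of "1/2"] by simp
    have "(\<lambda>n. \<bar>lam n\<bar> * (\<bar>L\<bar> + 1)) \<longlonglongrightarrow> \<bar>0\<bar> * (\<bar>L\<bar> + 1)" by (intro tendsto_intros l0)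
    then have l2: "(\<lambda>n. \<bar>lam n\<bar> * (\<bar>L\<bar> + 1)) \<longlonglongrightarrow> 0" by simp
    have e2: "\<forall>\<^sub>F n in sequentially. \<bar>lam n\<bar> * (\<bar>L\<bar> + 1) < 1/2"
      using order_tendstoD(2)[OF l2, of "1/2"] by simp
    have lpos: "\<forall>\<^sub>F n in sequentially. lam n > 0"
      using e1 e2
    proof eventually_elim
      case (elim n)
      show ?case
      proof (rule ccontr)
        assume "\<not> lam n > 0"
        then have "lam n \<le> 0" by simp
        have "L \<le> fst f0 \<bullet> x n" using L x by blast
        then have "lam n * (fst f0 \<bullet> x n) \<le> lam n * L" using \<open>lam n \<le> 0\<close> by (rule mult_left_mono_neg)
        also have "\<dots> \<le> \<bar>lam n\<bar> * \<bar>L\<bar>" by (metis abs_ge_self abs_mult)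
        also have "\<dots> \<le> \<bar>lam n\<bar> * (\<bar>L\<bar> + 1)" by (intro mult_left_mono) auto
        finally show False using elim by linarith
      qed
    qed
    have "\<forall>p\<in>A. 0 \<le> s p * (fst p \<bullet> v)"
    proof
      fix p assume p: "p \<in> A"
      have la: "(\<lambda>n. s p * (fst p \<bullet> (lam n *\<^sub>R x n))) \<longlonglongrightarrow> s p * (fst p \<bullet> v)"
        by (intro tendsto_intros lv)
      have lb: "(\<lambda>n. - (lam n * (s p * snd p))) \<longlonglongrightarrow> - (0 * (s p * snd p))"
        by (intro tendsto_intros l0)
      have "\<forall>\<^sub>F n in sequentially. - (lam n * (s p * snd p)) \<le> s p * (fst p \<bullet> (lam n *\<^sub>R x n))"
        using lpos
      proof eventually_elim
        case (elim n)
        have "0 < Sg p (x n)" using x p Delta_eq by blast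
        then have "0 \<le> lam n * Sg p (x n)" using elim by simp
        then show ?case unfolding Sg_def afn_def by (simp add: algebra_simps)
      qed
      from tendsto_le[OF _ la lb this] show "0 \<le> s p * (fst p \<bullet> v)" by simp
    qed
    then show "v \<in> K" using v unfolding K_chart by blast
  qed
qed

lemma finW: "finite (W_fns A f0)"
proof -
  have "W_fns A f0 \<subseteq> (\<lambda>p. hratio p f0) ` A" unfolding W_fns_def by auto
  then show ?thesis using finA finite_subset by blast
qed

lemma g0_ex: "\<exists>g\<in>K. \<forall>p\<in>A. (\<exists>v\<in>K. fst p \<bullet> v \<noteq> 0) \<longrightarrow> fst p \<bullet> g \<noteq> 0"
proof -
  have "\<exists>g\<in>K. \<forall>p\<in>B. (\<exists>v\<in>K. fst p \<bullet> v \<noteq> 0) \<longrightarrow> fst p \<bullet> g \<noteq> 0" if "B \<subseteq> A" for B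
    using finite_subset[OF that finA] that
  proof (induction B rule: finite_subset_induct')
    case empty
    then show ?case using K_ne by blast
  next
    case (insert q B)
    then obtain g where g: "g \<in> K" "\<forall>p\<in>B. (\<exists>v\<in>K. fst p \<bullet> v \<noteq> 0) \<longrightarrow> fst p \<bullet> g \<noteq> 0" by blast
    show ?case
    proof (cases "(\<exists>v\<in>K. fst q \<bullet> v \<noteq> 0) \<and> fst q \<bullet> g = 0")
      case False
      then show ?thesis using g by blast
    next
      case True
      then obtain v where v: "v \<in> K" "fst q \<bullet> v \<noteq> 0" by blast
      have qg: "fst q \<bullet> g = 0" using True by blast
      define g' where "g' = (1 - 1/2) *\<^sub>R g + (1/2::real) *\<^sub>R v"
      have g'K: "g' \<in> K" unfolding g'_def using K_comb[OF g(1) v(1), of "1/2"] by simp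
      have "\<forall>p\<in>insert q B. (\<exists>v\<in>K. fst p \<bullet> v \<noteq> 0) \<longrightarrow> fst p \<bullet> g' \<noteq> 0"
      proof
        fix p assume p: "p \<in> insert q B"
        show "(\<exists>v\<in>K. fst p \<bullet> v \<noteq> 0) \<longrightarrow> fst p \<bullet> g' \<noteq> 0"
        proof (cases "p = q")
          case True
          then show ?thesis using True v(2) qg unfolding g'_def
            by (simp add: inner_add_right)
        next
          case False
          then have pB: "p \<in> B" using p by simp
          have pA: "p \<in> A" using pB insert by blast
          show ?thesis
          proof
            assume "\<exists>v\<in>K. fst p \<bullet> v \<noteq> 0"
            then have ng: "fst p \<bullet> g \<noteq> 0" using g pB by blast
            have "0 \<le> s p * (fst p \<bullet> g)" using g(1) pA unfolding K_def by auto
            then have "0 < s p * (fst p \<bullet> g)" using ng s_pm[OF pA] by auto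
            moreover have "0 \<le> s p * (fst p \<bullet> v)" using v(1) pA unfolding K_def by auto
            ultimately have "0 < s p * (fst p \<bullet> g')" unfolding g'_def
              by (simp add: inner_add_right algebra_simps)
            then show "fst p \<bullet> g' \<noteq> 0" by auto
          qed
        qed
      qed
      then show ?thesis using g'K by blast
    qed
  qed
  then show ?thesis by blast
qed

definition "g0 = (SOME g. g \<in> K \<and> (\<forall>p\<in>A. (\<exists>v\<in>K. fst p \<bullet> v \<noteq> 0) \<longrightarrow> fst p \<bullet> g \<noteq> 0))"

lemma g0: "g0 \<in> K" "\<And>p. p \<in> A \<Longrightarrow> fst p \<bullet> g0 = 0 \<Longrightarrow> \<forall>v\<in>K. fst p \<bullet> v = 0"
proof -
  have ex: "\<exists>g. g \<in> K \<and> (\<forall>p\<in>A. (\<exists>v\<in>K. fst p \<bullet> v \<noteq> 0) \<longrightarrow> fst p \<bullet> g \<noteq> 0)" using g0_ex by blast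
  have "g0 \<in> K \<and> (\<forall>p\<in>A. (\<exists>v\<in>K. fst p \<bullet> v \<noteq> 0) \<longrightarrow> fst p \<bullet> g0 \<noteq> 0)"
    unfolding g0_def by (rule someI_ex[OF ex])
  then show "g0 \<in> K" "\<And>p. p \<in> A \<Longrightarrow> fst p \<bullet> g0 = 0 \<Longrightarrow> \<forall>v\<in>K. fst p \<bullet> v = 0" by auto
qed

definition "Gf = {y\<in>chart f0. \<forall>\<phi>\<in>W_fns A f0. sgn (\<phi> y) = sgn (\<phi> g0)}"

lemma W_fnsE: "\<phi> \<in> W_fns A f0 \<Longrightarrow> \<exists>p\<in>A. \<phi> = hratio p f0"
  unfolding W_fns_def by auto

lemma class_sub_K:
  assumes y0: "y0 \<in> K"
  shows "{z\<in>chart f0. \<forall>\<phi>\<in>W_fns A f0. sgn (\<phi> z) = sgn (\<phi> y0)} \<subseteq> K"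
proof
  fix y assume y: "y \<in> {z\<in>chart f0. \<forall>\<phi>\<in>W_fns A f0. sgn (\<phi> z) = sgn (\<phi> y0)}"
  have y0c: "y0 \<in> chart f0" using y0 K_chart by auto
  have yc: "y \<in> chart f0" using y by auto
  have "\<forall>p\<in>A. 0 \<le> s p * (fst p \<bullet> y)"
  proof
    fix p assume p: "p \<in> A"
    have b: "0 \<le> s p * (fst p \<bullet> y0)" using y0 p unfolding K_def by auto
    show "0 \<le> s p * (fst p \<bullet> y)"
    proof (cases "\<exists>c. \<forall>v\<in>chart f0. hratio p f0 v = c")
      case True
      then obtain c where "\<forall>v\<in>chart f0. hratio p f0 v = c" by blast
      then have "fst p \<bullet> y = fst p \<bullet> y0" using yc y0c hratio_chart by metis
      then show ?thesis using b by simp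
    next
      case False
      then have "hratio p f0 \<in> W_fns A f0" unfolding W_fns_def using p by blast
      then have "sgn (hratio p f0 y) = sgn (hratio p f0 y0)" using y by blast
      then have "sgn (fst p \<bullet> y) = sgn (fst p \<bullet> y0)" using hratio_chart[OF yc] hratio_chart[OF y0c] by simp
      then show ?thesis using sgn_transfer[OF s_pm[OF p] _ b] by blast
    qed
  qed
  then show "y \<in> K" using yc unfolding K_chart by blast
qed

lemma Gf_face: "Gf \<in> W_faces A f0"
  unfolding Gf_def W_faces_def arr_faces_def using g0(1) K_chart by blast

lemma Gf_sub_K: "Gf \<subseteq> K" unfolding Gf_def using class_sub_K[OF g0(1)] .

lemma K_sub_clG: "K \<subseteq> closure Gf"
proof
  fix k assume k: "k \<in> K"
  show "k \<in> closure Gf"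
  proof (rule seg_closure[where d = g0], intro allI impI)
    fix \<delta> :: real assume \<delta>: "0 < \<delta> \<and> \<delta> \<le> 1"
    define w where "w = (1-\<delta>) *\<^sub>R k + \<delta> *\<^sub>R g0"
    have wK: "w \<in> K" unfolding w_def using K_comb[OF k g0(1)] \<delta> by auto
    have wc: "w \<in> chart f0" using wK K_chart by auto
    have g0c: "g0 \<in> chart f0" using g0(1) K_chart by auto
    have "\<forall>\<phi>\<in>W_fns A f0. sgn (\<phi> w) = sgn (\<phi> g0)"
    proof
      fix \<phi> assume "\<phi> \<in> W_fns A f0"
      then obtain p where p: "p \<in> A" "\<phi> = hratio p f0" using W_fnsE by blast
      show "sgn (\<phi> w) = sgn (\<phi> g0)"
      proof (cases "fst p \<bullet> g0 = 0")
        case True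
        then have "fst p \<bullet> w = 0" using g0(2)[OF p(1)] wK by blast
        then show ?thesis using True p(2) hratio_chart[OF wc] hratio_chart[OF g0c] by simp
      next
        case False
        have "0 \<le> s p * (fst p \<bullet> g0)" using g0(1) p unfolding K_def by auto
        then have gp: "0 < s p * (fst p \<bullet> g0)" using False s_pm[OF p(1)] by auto
        have "0 \<le> s p * (fst p \<bullet> k)" using k p unfolding K_def by auto
        then have "0 \<le> (1-\<delta>) * (s p * (fst p \<bullet> k))" using \<delta> by simp
        moreover have "0 < \<delta> * (s p * (fst p \<bullet> g0))" using gp \<delta> by simp
        moreover have "s p * (fst p \<bullet> w) = (1-\<delta>) * (s p * (fst p \<bullet> k)) + \<delta> * (s p * (fst p \<bullet> g0))"
          unfolding w_def by (simp add: inner_add_right algebra_simps)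
        ultimately have "0 < s p * (fst p \<bullet> w)" by linarith
        then have "sgn (fst p \<bullet> w) = s p" "sgn (fst p \<bullet> g0) = s p"
          using sgn_pos_s[OF s_pm[OF p(1)]] gp by auto
        then show ?thesis using p(2) hratio_chart[OF wc] hratio_chart[OF g0c] by simp
      qed
    qed
    then show "(1-\<delta>) *\<^sub>R k + \<delta> *\<^sub>R g0 \<in> Gf" unfolding Gf_def using wc w_def by blast
  qed
qed

lemma clG: "closure Gf = K"
  using K_sub_clG closure_minimal[OF Gf_sub_K K_closed] by blast

end



context cor1
begin

lemma T_prop: "trace_inf A f0 \<Delta> \<in> W_faces A f0 \<and> trace_inf A f0 \<Delta> \<subseteq> K \<and>
   (\<forall>F'\<in>W_faces A f0. F' \<subseteq> K \<longrightarrow> aff_dim F' \<le> aff_dim (trace_inf A f0 \<Delta>))"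
proof -
  have ex: "\<exists>F. F \<in> W_faces A f0 \<and> F \<subseteq> inf_closure f0 \<Delta> \<and>
      (\<forall>F'\<in>W_faces A f0. F' \<subseteq> inf_closure f0 \<Delta> \<longrightarrow> aff_dim F' \<le> aff_dim F)"
    using max_face_exists[of Gf "W_faces A f0" "\<lambda>F. F \<subseteq> inf_closure f0 \<Delta>"] Gf_face Gf_sub_K
      inf_closure_eq by blast
  show ?thesis unfolding trace_inf_def inf_closure_eq using someI_ex[OF ex[unfolded inf_closure_eq]] .
qed

lemma T_eq: "trace_inf A f0 \<Delta> = Gf"
proof (rule ccontr)
  let ?T = "trace_inf A f0 \<Delta>"
  assume ne: "?T \<noteq> Gf"
  obtain t0 where t0: "t0 \<in> chart f0" "?T = {y\<in>chart f0. \<forall>\<phi>\<in>W_fns A f0. sgn (\<phi> y) = sgn (\<phi> t0)}"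
    using T_prop unfolding W_faces_def arr_faces_def by blast
  have "\<exists>\<phi>\<in>W_fns A f0. sgn (\<phi> t0) \<noteq> sgn (\<phi> g0)"
  proof (rule ccontr)
    assume "\<not> ?thesis"
    then have "?T = Gf" unfolding t0(2) Gf_def by auto
    then show False using ne by simp
  qed
  then obtain \<phi> where \<phi>: "\<phi> \<in> W_fns A f0" "sgn (\<phi> t0) \<noteq> sgn (\<phi> g0)" by blast
  then obtain p where p: "p \<in> A" "\<phi> = hratio p f0" using W_fnsE by blast
  have t0T: "t0 \<in> ?T" using t0 by auto
  then have t0K: "t0 \<in> K" using T_prop by blast
  have g0c: "g0 \<in> chart f0" using g0(1) K_chart by auto
  have hg: "\<phi> g0 = fst p \<bullet> g0" "\<phi> t0 = fst p \<bullet> t0" using p(2) hratio_chart[OF g0c] hratio_chart[OF t0(1)] by auto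
  have ng: "fst p \<bullet> g0 \<noteq> 0"
  proof
    assume "fst p \<bullet> g0 = 0"
    then have "fst p \<bullet> t0 = 0" using g0(2)[OF p(1)] t0K by blast
    then show False using \<phi>(2) hg \<open>fst p \<bullet> g0 = 0\<close> by simp
  qed
  have "0 \<le> s p * (fst p \<bullet> g0)" using g0(1) p unfolding K_def by auto
  then have gp: "0 < s p * (fst p \<bullet> g0)" using ng s_pm[OF p(1)] by auto
  have sg0: "sgn (\<phi> g0) = s p" using sgn_pos_s[OF s_pm[OF p(1)] gp] hg by simp
  have "0 \<le> s p * (fst p \<bullet> t0)" using t0K p unfolding K_def by auto
  have t00: "fst p \<bullet> t0 = 0"
  proof (rule ccontr)
    assume "fst p \<bullet> t0 \<noteq> 0"
    then have "0 < s p * (fst p \<bullet> t0)" using \<open>0 \<le> s p * (fst p \<bullet> t0)\<close> s_pm[OF p(1)] by auto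
    then have "sgn (\<phi> t0) = s p" using sgn_pos_s[OF s_pm[OF p(1)]] hg by simp
    then show False using \<phi>(2) sg0 by simp
  qed
  define H where "H = {v. fst p \<bullet> v = 0}"
  have TH: "?T \<subseteq> K \<inter> H"
  proof
    fix y assume y: "y \<in> ?T"
    then have yc: "y \<in> chart f0" and "sgn (\<phi> y) = sgn (\<phi> t0)" using t0(2) \<phi>(1) by auto
    then have "sgn (fst p \<bullet> y) = 0" using t00 hg p(2) hratio_chart[OF yc] by simp
    then show "y \<in> K \<inter> H" using y T_prop unfolding H_def by (auto simp: sgn_0_0)
  qed
  have "affine hull (K \<inter> H) \<subseteq> H"
    by (rule hull_minimal) (auto simp: H_def affine_hyperplane)
  then have "g0 \<notin> affine hull (K \<inter> H)" using ng unfolding H_def by auto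
  moreover have "g0 \<in> affine hull K" using g0(1) by (simp add: hull_inc)
  moreover have "affine hull (K \<inter> H) \<subseteq> affine hull K" by (simp add: hull_mono)
  ultimately have "affine hull (K \<inter> H) \<subset> affine hull K" by blast
  then have "aff_dim (K \<inter> H) < aff_dim K" by (rule aff_dim_psubset)
  moreover have "aff_dim ?T \<le> aff_dim (K \<inter> H)" using TH by (rule aff_dim_subset)
  moreover have "aff_dim K = aff_dim Gf" using clG closure_aff_dim[of Gf] by simp
  moreover have "aff_dim Gf \<le> aff_dim ?T" using T_prop Gf_face Gf_sub_K by blast
  ultimately show False by simp
qed

lemma clT: "closure (trace_inf A f0 \<Delta>) = K"
  using T_eq clG by simp

lemma c_inf_val: "c_inf \<alpha> \<theta> A f f0 \<Delta> =
    exp (\<alpha> * (complex_of_real (ln Mstar) + \<i> * complex_of_real \<theta>))"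
proof -
  let ?T = "trace_inf A f0 \<Delta>"
  let ?h = "hratio f f0"
  let ?S = "ext_support (W_faces A f0) ?T ?h"
  have vc: "vstar \<in> chart f0" using vstar(1) K_chart by auto
  have vmax: "vstar \<in> max_abs_set ?T ?h"
    unfolding max_abs_set_def clT using vstar hratio_chart[OF vc] Mstar_def
    by (auto simp: K_chart hratio_chart)
  have aff: "\<forall>\<psi>\<in>insert ?h (W_fns A f0). \<forall>x\<in>chart f0. \<forall>z\<in>chart f0. \<forall>u.
      \<psi> ((1-u) *\<^sub>R x + u *\<^sub>R z) = (1-u) * \<psi> x + u * \<psi> z"
  proof (intro ballI allI)
    fix \<psi> x z u assume \<psi>: "\<psi> \<in> insert ?h (W_fns A f0)" and xz: "x \<in> chart f0" "z \<in> chart f0"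
    then obtain q where "\<psi> = hratio q f0" using W_fnsE by blast
    then show "\<psi> ((1-u) *\<^sub>R x + u *\<^sub>R z) = (1-u) * \<psi> x + u * \<psi> z" using hratio_comb[OF xz] by simp
  qed
  have sgnh: "\<forall>x\<in>chart f0. \<forall>z\<in>chart f0. (\<forall>\<psi>\<in>W_fns A f0. sgn (\<psi> x) = sgn (\<psi> z)) \<longrightarrow> sgn (?h x) = sgn (?h z)"
  proof (intro ballI impI)
    fix x z assume xz: "x \<in> chart f0" "z \<in> chart f0" and all: "\<forall>\<psi>\<in>W_fns A f0. sgn (\<psi> x) = sgn (\<psi> z)"
    show "sgn (?h x) = sgn (?h z)"
    proof (cases "\<exists>c. \<forall>v\<in>chart f0. ?h v = c")
      case True then show ?thesis using xz by force
    next
      case False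
      then have "?h \<in> W_fns A f0" unfolding W_fns_def using fA by blast
      then show ?thesis using all by blast
    qed
  qed
  have cls: "{z\<in>chart f0. \<forall>\<psi>\<in>W_fns A f0. sgn (\<psi> z) = sgn (\<psi> vstar)} \<subseteq> closure ?T"
    unfolding clT by (rule class_sub_K[OF vstar(1)])
  have sub: "{z\<in>chart f0. \<forall>\<psi>\<in>W_fns A f0. sgn (\<psi> z) = sgn (\<psi> vstar)} \<subseteq> max_abs_set ?T ?h"
    by (rule face_max[OF finW aff _ sgnh vc vmax cls]) (use chart_comb in blast)
  have face: "{z\<in>chart f0. \<forall>\<psi>\<in>W_fns A f0. sgn (\<psi> z) = sgn (\<psi> vstar)} \<in> W_faces A f0"
    unfolding W_faces_def arr_faces_def using vc by blast
  have S: "?S \<in> W_faces A f0" "?S \<subseteq> max_abs_set ?T ?h" using ext_support_prop[OF face sub] by auto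
  define z where "z = (SOME x. x \<in> ?S)"
  have zS: "z \<in> ?S" unfolding z_def using arr_faces_point(1) S(1) unfolding W_faces_def by blast
  then have zm: "z \<in> max_abs_set ?T ?h" using S(2) by blast
  then have zK: "z \<in> K" unfolding max_abs_set_def clT by auto
  have zc: "z \<in> chart f0" using zK K_chart by auto
  have "\<bar>?h z\<bar> \<ge> \<bar>?h vstar\<bar>" using zm vstar(1) unfolding max_abs_set_def clT by auto
  moreover have "\<bar>?h z\<bar> \<le> Mstar" using vstar(2) zK hratio_chart[OF zc] by simp
  ultimately have "\<bar>?h z\<bar> = Mstar" using hratio_chart[OF vc] Mstar_def by simp
  then show ?thesis unfolding c_inf_def Let_def face_value_def z_def[symmetric] by simp
qed

end



context cor1
begin

definition "Dt t = \<Delta> \<inter> {x. afn f0 x < t}"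
definition "Ct t = {x\<in>Dc. afn f0 x \<le> t}"
definition "zt t = (SOME x. x \<in> ext_support (faces (add_level A f0 t)) (Dt t) (afn f))"
definition "m t = \<bar>afn f (zt t)\<bar>"

lemma seg_Delta: assumes "z \<in> Dc" "0 < \<delta>" "\<delta> \<le> 1" shows "(1-\<delta>) *\<^sub>R z + \<delta> *\<^sub>R d0 \<in> \<Delta>"
proof -
  have "\<forall>p\<in>A. 0 < Sg p ((1-\<delta>) *\<^sub>R z + \<delta> *\<^sub>R d0)"
  proof
    fix p assume p: "p \<in> A"
    have "(1-\<delta>) * Sg p z \<ge> 0" using assms p unfolding Dc_def by auto
    moreover have "\<delta> * Sg p d0 > 0" using Sg_d0[OF p] assms by auto
    ultimately show "0 < Sg p ((1-\<delta>) *\<^sub>R z + \<delta> *\<^sub>R d0)" unfolding Sg_comb by linarith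
  qed
  then show ?thesis using Delta_eq by blast
qed

lemma afn_add_level: "afn (fst f0, snd f0 - t) x = afn f0 x - t"
  unfolding afn_def by simp

lemma LHS_prop:
  assumes t: "t > afn f0 d0"
  shows "zt t \<in> Ct t \<and> (\<forall>x\<in>Ct t. \<bar>afn f x\<bar> \<le> m t)"
proof -
  have clos: "closure (Dt t) = Ct t"
  proof
    have "Dt t \<subseteq> Ct t" unfolding Dt_def Ct_def using Delta_sub_Dc by auto
    moreover have "closed (Ct t)"
    proof -
      have "closed {x. afn f0 x \<le> t}" by (intro closed_Collect_le continuous_intros)
      moreover have "Ct t = Dc \<inter> {x. afn f0 x \<le> t}" unfolding Ct_def by auto
      ultimately show ?thesis using closed_Dc by auto
    qed
    ultimately show "closure (Dt t) \<subseteq> Ct t" by (rule closure_minimal)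
  next
    show "Ct t \<subseteq> closure (Dt t)"
    proof
      fix z assume z: "z \<in> Ct t"
      show "z \<in> closure (Dt t)"
      proof (rule seg_closure[where d = d0], intro allI impI)
        fix \<delta> :: real assume \<delta>: "0 < \<delta> \<and> \<delta> \<le> 1"
        have "(1-\<delta>) *\<^sub>R z + \<delta> *\<^sub>R d0 \<in> \<Delta>" using seg_Delta z \<delta> unfolding Ct_def by auto
        moreover have "(1-\<delta>) * afn f0 z \<le> (1-\<delta>) * t" using z \<delta> unfolding Ct_def by (intro mult_left_mono) auto
        moreover have "\<delta> * afn f0 d0 < \<delta> * t" using t \<delta> by simp
        moreover have "afn f0 ((1-\<delta>) *\<^sub>R z + \<delta> *\<^sub>R d0) = (1-\<delta>) * afn f0 z + \<delta> * afn f0 d0"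
          by (rule afn_comb)
        moreover have "(1-\<delta>) * t + \<delta> * t = t" by (simp add: algebra_simps)
        ultimately show "(1-\<delta>) *\<^sub>R z + \<delta> *\<^sub>R d0 \<in> Dt t" unfolding Dt_def by auto
      qed
    qed
  qed
  obtain R where R: "\<forall>x\<in>\<Delta>. norm x \<ge> R \<longrightarrow> afn f0 x \<ge> t" using gr unfolding growing_def by blast
  have "Dt t \<subseteq> cball 0 R" unfolding Dt_def using R by (force simp: not_le)
  then have "bounded (Dt t)" using bounded_cball bounded_subset by blast
  then have cpt: "compact (Ct t)" using clos compact_closure by metis
  have ne: "Ct t \<noteq> {}" using d0 Delta_sub_Dc t unfolding Ct_def by force
  obtain y where y: "y \<in> Ct t" "\<forall>x\<in>Ct t. \<bar>afn f x\<bar> \<le> \<bar>afn f y\<bar>"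
    using continuous_attains_sup[OF cpt ne, of "\<lambda>x. \<bar>afn f x\<bar>"]
    by (auto intro!: continuous_intros)
  have ymax: "y \<in> max_abs_set (Dt t) (afn f)" unfolding max_abs_set_def clos using y by auto
  let ?B = "add_level A f0 t"
  have finB: "finite (afn ` ?B)" unfolding add_level_def using finA by simp
  have fB: "f \<in> ?B" unfolding add_level_def using fA by simp
  have aff: "\<forall>\<psi>\<in>insert (afn f) (afn ` ?B). \<forall>x\<in>UNIV. \<forall>z\<in>UNIV. \<forall>u.
      \<psi> ((1-u) *\<^sub>R x + u *\<^sub>R z) = (1-u) * \<psi> x + u * \<psi> z"
    using afn_comb by blast
  have sgnf: "\<forall>x\<in>UNIV. \<forall>z\<in>UNIV. (\<forall>\<psi>\<in>afn ` ?B. sgn (\<psi> x) = sgn (\<psi> z)) \<longrightarrow> sgn (afn f x) = sgn (afn f z)"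
    using fB by blast
  have cls: "{z\<in>UNIV. \<forall>\<psi>\<in>afn ` ?B. sgn (\<psi> z) = sgn (\<psi> y)} \<subseteq> closure (Dt t)"
  proof
    fix z assume z: "z \<in> {z\<in>UNIV. \<forall>\<psi>\<in>afn ` ?B. sgn (\<psi> z) = sgn (\<psi> y)}"
    have "\<forall>p\<in>A. 0 \<le> Sg p z"
    proof
      fix p assume p: "p \<in> A"
      have "sgn (afn p z) = sgn (afn p y)" using z p unfolding add_level_def by auto
      moreover have "0 \<le> s p * afn p y" using y(1) p unfolding Ct_def Dc_def Sg_def by auto
      ultimately show "0 \<le> Sg p z" unfolding Sg_def using sgn_transfer[OF s_pm[OF p]] by blast
    qed
    moreover have "sgn (afn f0 z - t) = sgn (afn f0 y - t)"
      using z unfolding add_level_def by (auto simp: afn_add_level)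
    moreover have "0 \<le> (-1) * (afn f0 y - t)" using y(1) unfolding Ct_def by auto
    ultimately have "z \<in> Ct t" unfolding Ct_def Dc_def using sgn_transfer[of "-1"] by force
    then show "z \<in> closure (Dt t)" using clos by simp
  qed
  have sub: "{z\<in>UNIV. \<forall>\<psi>\<in>afn ` ?B. sgn (\<psi> z) = sgn (\<psi> y)} \<subseteq> max_abs_set (Dt t) (afn f)"
    by (rule face_max[OF finB aff _ sgnf _ ymax cls]) auto
  have face: "{z\<in>UNIV. \<forall>\<psi>\<in>afn ` ?B. sgn (\<psi> z) = sgn (\<psi> y)} \<in> faces ?B"
    unfolding faces_def arr_faces_def by blast
  have S: "ext_support (faces ?B) (Dt t) (afn f) \<in> faces ?B"
    "ext_support (faces ?B) (Dt t) (afn f) \<subseteq> max_abs_set (Dt t) (afn f)"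
    using ext_support_prop[OF face sub] by auto
  have "zt t \<in> ext_support (faces ?B) (Dt t) (afn f)"
    unfolding zt_def using arr_faces_point(1) S(1) unfolding faces_def by blast
  then have "zt t \<in> max_abs_set (Dt t) (afn f)" using S(2) by blast
  then show ?thesis unfolding max_abs_set_def clos m_def by auto
qed

lemma LHS_val: "c_bdd (\<lambda>x. exp (\<alpha> * (complex_of_real (ln \<bar>afn f x\<bar>) + \<i> * complex_of_real \<theta>)))
      (add_level A f0 t) f (\<Delta> \<inter> {x. afn f0 x < t})
    = exp (\<alpha> * (complex_of_real (ln (m t)) + \<i> * complex_of_real \<theta>))"
  unfolding c_bdd_def face_value_def m_def zt_def Dt_def by simp

lemma lower:
  assumes t: "t > afn f0 d0 + 1"
  shows "m t \<ge> (t - 1 - afn f0 d0) * Mstar - \<bar>afn f d0\<bar>"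
proof -
  define r where "r = t - 1 - afn f0 d0"
  have r: "r \<ge> 0" using t unfolding r_def by simp
  define x where "x = d0 + r *\<^sub>R vstar"
  have xD: "x \<in> \<Delta>" unfolding x_def using ray_Delta[OF d0 _ r] vstar(1) K_sub_Cn by blast
  have "afn f0 x = t - 1" unfolding x_def afn_ray r_def using vstar(1) unfolding K_def by simp
  then have "x \<in> Ct t" using xD Delta_sub_Dc unfolding Ct_def by auto
  then have "\<bar>afn f x\<bar> \<le> m t" using LHS_prop t by simp
  moreover have "\<bar>afn f x\<bar> \<ge> r * Mstar - \<bar>afn f d0\<bar>"
  proof -
    have "\<bar>afn f x\<bar> = \<bar>afn f d0 + r * (fst f \<bullet> vstar)\<bar>" unfolding x_def afn_ray ..
    also have "\<dots> \<ge> \<bar>r * (fst f \<bullet> vstar)\<bar> - \<bar>afn f d0\<bar>" by linarith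
    moreover have "\<bar>r * (fst f \<bullet> vstar)\<bar> = r * Mstar" using r unfolding Mstar_def by (simp add: abs_mult)
    ultimately show ?thesis by linarith
  qed
  ultimately show ?thesis unfolding r_def by linarith
qed

lemma Ubound:
  assumes e: "\<epsilon> > 0"
  shows "\<exists>T. \<forall>x\<in>Dc. afn f0 x \<ge> T \<longrightarrow> \<bar>afn f x\<bar> \<le> (Mstar + \<epsilon>) * afn f0 x"
proof (rule ccontr)
  assume "\<not> ?thesis"
  then have "\<forall>n::nat. \<exists>x\<in>Dc. afn f0 x \<ge> real n \<and> \<bar>afn f x\<bar> > (Mstar + \<epsilon>) * afn f0 x"
    by (meson not_le)
  then obtain X where X: "\<forall>n. X n \<in> Dc \<and> afn f0 (X n) \<ge> real n \<and> \<bar>afn f (X n)\<bar> > (Mstar + \<epsilon>) * afn f0 (X n)"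
    by metis
  define k where "k = norm (fst f0) + 1"
  have k: "k > 0" unfolding k_def by (simp add: add_nonneg_pos)
  have nb: "real n \<le> k * norm (X n) + \<bar>snd f0\<bar>" for n
  proof -
    have "real n \<le> afn f0 (X n)" using X by blast
    also have "\<dots> \<le> \<bar>fst f0 \<bullet> X n\<bar> + \<bar>snd f0\<bar>" unfolding afn_def by linarith
    also have "\<bar>fst f0 \<bullet> X n\<bar> \<le> norm (fst f0) * norm (X n)" by (rule Cauchy_Schwarz_ineq2)
    also have "norm (fst f0) * norm (X n) \<le> k * norm (X n)" unfolding k_def by (simp add: mult_right_mono)
    finally show ?thesis by simp
  qed
  have lim: "filterlim (\<lambda>n. norm (X n)) at_top sequentially"
    unfolding filterlim_at_top
  proof
    fix Z :: real
    obtain N :: nat where N: "real N \<ge> k * Z + \<bar>snd f0\<bar>" using real_arch_simple by blast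
    have "\<forall>n\<ge>N. Z \<le> norm (X n)"
    proof (intro allI impI)
      fix n assume "n \<ge> N"
      then have "k * Z + \<bar>snd f0\<bar> \<le> k * norm (X n) + \<bar>snd f0\<bar>" using nb[of n] N
        by (smt (verit) of_nat_mono)
      then show "Z \<le> norm (X n)" using k by simp
    qed
    then show "\<forall>\<^sub>F n in sequentially. Z \<le> norm (X n)" unfolding eventually_sequentially by blast
  qed
  obtain r u where ru: "norm u = 1" "u \<in> Cn"
    "\<forall>q. (\<lambda>n. afn q (X (r n)) / norm (X (r n))) \<longlonglongrightarrow> fst q \<bullet> u"
    using seqlemma[OF _ lim] X by blast
  have l1: "(\<lambda>n. \<bar>afn f (X (r n)) / norm (X (r n))\<bar>) \<longlonglongrightarrow> \<bar>fst f \<bullet> u\<bar>"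
    using ru(3)[rule_format, of f] by (intro tendsto_intros)
  have l2: "(\<lambda>n. (Mstar + \<epsilon>) * (afn f0 (X (r n)) / norm (X (r n)))) \<longlonglongrightarrow> (Mstar + \<epsilon>) * (fst f0 \<bullet> u)"
    using ru(3)[rule_format, of f0] by (intro tendsto_intros)
  have "\<forall>n. (Mstar + \<epsilon>) * (afn f0 (X (r n)) / norm (X (r n))) \<le> \<bar>afn f (X (r n)) / norm (X (r n))\<bar>"
  proof
    fix n
    have "(Mstar + \<epsilon>) * afn f0 (X (r n)) \<le> \<bar>afn f (X (r n))\<bar>" using X by (meson less_imp_le)
    then have "(Mstar + \<epsilon>) * afn f0 (X (r n)) / norm (X (r n)) \<le> \<bar>afn f (X (r n))\<bar> / norm (X (r n))"
      by (simp add: divide_right_mono)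
    then show "(Mstar + \<epsilon>) * (afn f0 (X (r n)) / norm (X (r n))) \<le> \<bar>afn f (X (r n)) / norm (X (r n))\<bar>"
      by simp
  qed
  then have ineq: "(Mstar + \<epsilon>) * (fst f0 \<bullet> u) \<le> \<bar>fst f \<bullet> u\<bar>"
    using tendsto_le[OF _ l1 l2] by simp
  have u0: "u \<noteq> 0" using ru(1) by auto
  have pos: "fst f0 \<bullet> u > 0" using L1[OF ru(2) u0] .
  have vK: "(1 / (fst f0 \<bullet> u)) *\<^sub>R u \<in> K" using scale_K[OF ru(2) u0] .
  have "\<bar>fst f \<bullet> ((1 / (fst f0 \<bullet> u)) *\<^sub>R u)\<bar> = \<bar>fst f \<bullet> u\<bar> / (fst f0 \<bullet> u)" using pos by simp
  also have "\<dots> \<ge> Mstar + \<epsilon>" using ineq pos by (simp add: le_divide_eq)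
  finally have "\<bar>fst f \<bullet> ((1 / (fst f0 \<bullet> u)) *\<^sub>R u)\<bar> > Mstar" using e by linarith
  then show False using vstar(2) vK by fastforce
qed

lemma Bbound: "\<exists>B. \<forall>x\<in>Dc. afn f0 x \<le> T \<longrightarrow> \<bar>afn f x\<bar> \<le> B"
proof -
  obtain R where R: "\<forall>x\<in>Dc. R < norm x \<longrightarrow> T + 1 \<le> afn f0 x" using grow_cl by blast
  have "\<forall>x\<in>Dc. afn f0 x \<le> T \<longrightarrow> \<bar>afn f x\<bar> \<le> norm (fst f) * \<bar>R\<bar> + \<bar>snd f\<bar>"
  proof (intro ballI impI)
    fix x assume x: "x \<in> Dc" "afn f0 x \<le> T"
    then have nx: "norm x \<le> \<bar>R\<bar>" using R by force
    have "\<bar>afn f x\<bar> \<le> \<bar>fst f \<bullet> x\<bar> + \<bar>snd f\<bar>" unfolding afn_def by linarith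
    also have "\<bar>fst f \<bullet> x\<bar> \<le> norm (fst f) * norm x" by (rule Cauchy_Schwarz_ineq2)
    also have "norm (fst f) * norm x \<le> norm (fst f) * \<bar>R\<bar>" using nx by (simp add: mult_left_mono)
    finally show "\<bar>afn f x\<bar> \<le> norm (fst f) * \<bar>R\<bar> + \<bar>snd f\<bar>" by simp
  qed
  then show ?thesis by blast
qed

end



context cor1
begin

lemma ratio_lim: "((\<lambda>t. m t / t) \<longlongrightarrow> Mstar) at_top"
  unfolding tendsto_iff
proof (intro allI impI)
  fix e :: real assume e: "e > 0"
  define \<epsilon> where "\<epsilon> = e / 2"
  have \<epsilon>: "\<epsilon> > 0" using e unfolding \<epsilon>_def by simp
  obtain T where T: "\<forall>x\<in>Dc. afn f0 x \<ge> T \<longrightarrow> \<bar>afn f x\<bar> \<le> (Mstar + \<epsilon>) * afn f0 x"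
    using Ubound[OF \<epsilon>] by blast
  obtain B where B: "\<forall>x\<in>Dc. afn f0 x \<le> T \<longrightarrow> \<bar>afn f x\<bar> \<le> B" using Bbound by blast
  define c where "c = (1 + afn f0 d0) * Mstar + \<bar>afn f d0\<bar>"
  define N where "N = max (afn f0 d0 + 2) (max 1 (max (2 * \<bar>B\<bar> / e + 1) (2 * \<bar>c\<bar> / e + 1)))"
  have "\<forall>t\<ge>N. dist (m t / t) Mstar < e"
  proof (intro allI impI)
    fix t assume t: "t \<ge> N"
    have t1: "t \<ge> 1" "t > afn f0 d0 + 1" "t > 2 * \<bar>B\<bar> / e" "t > 2 * \<bar>c\<bar> / e"
      using t unfolding N_def by auto
    have tpos: "t > 0" using t1 by simp
    have eB: "\<bar>B\<bar> < e * t / 2" using t1(3) e by (simp add: field_simps)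
    have ec: "\<bar>c\<bar> < e * t / 2" using t1(4) e by (simp add: field_simps)
    have zt: "zt t \<in> Ct t" "\<forall>x\<in>Ct t. \<bar>afn f x\<bar> \<le> m t" using LHS_prop t1(2) by auto
    have up: "m t \<le> (Mstar + \<epsilon>) * t + \<bar>B\<bar>"
    proof (cases "afn f0 (zt t) \<ge> T")
      case True
      then have "m t \<le> (Mstar + \<epsilon>) * afn f0 (zt t)" using T zt(1) unfolding Ct_def m_def by auto
      also have "\<dots> \<le> (Mstar + \<epsilon>) * t" using zt(1) Mpos \<epsilon> unfolding Ct_def
        by (intro mult_left_mono) auto
      finally show ?thesis by simp
    next
      case False
      then have "m t \<le> B" using B zt(1) unfolding Ct_def m_def by auto
      moreover have "0 \<le> (Mstar + \<epsilon>) * t" using Mpos \<epsilon> tpos by simp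
      ultimately show ?thesis by linarith
    qed
    have lo: "m t \<ge> t * Mstar - c"
      using lower[OF t1(2)] unfolding c_def by (simp add: algebra_simps)
    have "\<bar>m t - t * Mstar\<bar> < e * t"
    proof -
      have "m t - t * Mstar \<le> \<epsilon> * t + \<bar>B\<bar>" using up by (simp add: algebra_simps)
      moreover have "\<epsilon> * t = e * t / 2" unfolding \<epsilon>_def by simp
      ultimately show ?thesis using lo eB ec by linarith
    qed
    moreover have "m t / t - Mstar = (m t - t * Mstar) / t" using tpos by (simp add: field_simps)
    ultimately have "\<bar>m t / t - Mstar\<bar> < e" using tpos by (simp add: abs_div pos_divide_less_eq)
    then show "dist (m t / t) Mstar < e" unfolding dist_real_def .
  qed
  then show "\<forall>\<^sub>F t in at_top. dist (m t / t) Mstar < e" unfolding eventually_at_top_linorder by blast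
qed

lemma e_lim: "((\<lambda>t. exp (\<alpha> * complex_of_real (ln (m t) - ln Mstar - ln t)) - 1) \<longlongrightarrow> 0) at_top"
proof -
  have l1: "((\<lambda>t. ln (m t / t) - ln Mstar) \<longlongrightarrow> ln Mstar - ln Mstar) at_top"
    using Mpos by (intro tendsto_intros ratio_lim) auto
  have l2: "((\<lambda>t. exp (\<alpha> * complex_of_real (ln (m t / t) - ln Mstar)) - 1) \<longlongrightarrow>
      exp (\<alpha> * complex_of_real (ln Mstar - ln Mstar)) - 1) at_top"
    by (intro tendsto_intros l1)
  have ev1: "\<forall>\<^sub>F t in at_top. m t / t > 0" using order_tendstoD(1)[OF ratio_lim Mpos] .
  have "\<forall>\<^sub>F t in at_top. exp (\<alpha> * complex_of_real (ln (m t / t) - ln Mstar)) - 1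
      = exp (\<alpha> * complex_of_real (ln (m t) - ln Mstar - ln t)) - 1"
    using ev1 eventually_gt_at_top[of 0]
  proof eventually_elim
    case (elim t)
    then have "m t > 0" by (simp add: zero_less_divide_iff)
    then have "ln (m t / t) = ln (m t) - ln t" using elim by (simp add: ln_div)
    then have "ln (m t / t) - ln Mstar = ln (m t) - ln Mstar - ln t" by simp
    then show ?case by (simp only:)
  qed
  from Lim_transform_eventually[OF l2 this] show ?thesis by simp
qed

end


theorem corollary1:
  fixes A :: "('v::euclidean_space \<times> real) set"
    and f0 f :: "'v \<times> real"
    and \<Delta> :: "'v set"
    and \<alpha> :: complex and \<theta> :: real
  assumes "arrangement A"
    and "essential A"
    and "fst f0 \<noteq> 0"
    and "f \<in> A"
    and "growing A f0 \<Delta>"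
    and "\<not> bounded ((\<lambda>x. \<bar>afn f x\<bar>) ` \<Delta>)"
  shows "\<exists>e :: real \<Rightarrow> complex. (e \<longlongrightarrow> 0) at_top \<and>
     (\<forall>\<^sub>F t in at_top.
        c_bdd (\<lambda>x. exp (\<alpha> * (complex_of_real (ln \<bar>afn f x\<bar>) + \<i> * complex_of_real \<theta>)))
              (add_level A f0 t) f (\<Delta> \<inter> {x. afn f0 x < t})
        = c_inf \<alpha> \<theta> A f f0 \<Delta> * exp (\<alpha> * complex_of_real (ln t)) * (1 + e t))"
proof -
  interpret cor1 A f0 f \<Delta> using assms by unfold_locales auto
  define e where "e t = exp (\<alpha> * complex_of_real (ln (m t) - ln Mstar - ln t)) - 1" for t
  have lim: "(e \<longlongrightarrow> 0) at_top" unfolding e_def by (rule e_lim)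
  have eq: "c_bdd (\<lambda>x. exp (\<alpha> * (complex_of_real (ln \<bar>afn f x\<bar>) + \<i> * complex_of_real \<theta>)))
              (add_level A f0 t) f (\<Delta> \<inter> {x. afn f0 x < t})
        = c_inf \<alpha> \<theta> A f f0 \<Delta> * exp (\<alpha> * complex_of_real (ln t)) * (1 + e t)" for t
  proof -
    have "c_inf \<alpha> \<theta> A f f0 \<Delta> * exp (\<alpha> * complex_of_real (ln t)) * (1 + e t)
        = exp (\<alpha> * (complex_of_real (ln Mstar) + \<i> * complex_of_real \<theta>)) * exp (\<alpha> * complex_of_real (ln t))
          * exp (\<alpha> * complex_of_real (ln (m t) - ln Mstar - ln t))"
      unfolding c_inf_val e_def by simp
    also have "\<dots> = exp (\<alpha> * (complex_of_real (ln Mstar) + \<i> * complex_of_real \<theta>) + \<alpha> * complex_of_real (ln t)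
          + \<alpha> * complex_of_real (ln (m t) - ln Mstar - ln t))"
      by (simp add: exp_add)
    also have "\<alpha> * (complex_of_real (ln Mstar) + \<i> * complex_of_real \<theta>) + \<alpha> * complex_of_real (ln t)
          + \<alpha> * complex_of_real (ln (m t) - ln Mstar - ln t)
        = \<alpha> * (complex_of_real (ln (m t)) + \<i> * complex_of_real \<theta>)"
      by (simp add: algebra_simps)
    finally show ?thesis unfolding LHS_val by simp
  qed
  show ?thesis using lim eq by (intro exI[of _ e]) auto
qed

end
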